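(* Let $\Lambda\ge3$ be an integer, $k\ge\Lambda^2(\Lambda+1)^2$, and let $$\widetilde{\bm{\chi}}=\sum_{l=0}^{\Lambda}\sqrt{\frac{2}{\Lambda+2}}\,\sin\!\left(\frac{(l+1)\pi}{\Lambda+2}\right)\bm{\psi}_l^0\in\mathcal{H}_\Lambda .$$ Then $$(\Delta\bm{x})^2_{\widetilde{\bm{\chi}}}<\frac{\pi^2}{(\Lambda+2)^2}+\frac{1}{(\Lambda+1)^2}<\frac{11}{(\Lambda+1)^2}.$$ In particular $\min_{\bm\chi}(\Delta\bm{x})^2_{\bm\chi}\le(\Delta\bm{x})^2_{\widetilde{\bm{\chi}}}<\frac{1}{\Lambda+1}$, the minimum being over unit vectors of $\mathcal{H}_\Lambda$.
   Context: (Fuzzy sphere $S^2_\Lambda$.) $\mathcal{H}_\Lambda$ is a Hilbert space with orthonormal basis $\{\bm{\psi}_l^m\}_{l=0,\dots,\Lambda;\ |m|\le l}$. Coordinates $x_a$, $a\in\{0,+,-\}$ (with $\pm\equiv\pm1$ in $m+a$): for $l<\Lambda$, $x_a\bm{\psi}_l^m=c_lA_l^{a,m}\bm{\psi}_{l-1}^{m+a}+c_{l+1}B_l^{a,m}\bm{\psi}_{l+1}^{m+a}$; for $l=\Lambda$, $x_a\bm{\psi}_\Lambda^m=c_\Lambda A_\Lambda^{a,m}\bm{\psi}_{\Lambda-1}^{m+a}$; here $A_l^{0,m}=\sqrt{\frac{(l+m)(l-m)}{(2l+1)(2l-1)}}$, $A_l^{\pm,m}=\pm\sqrt{\frac{(l\mp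 m)(l\mp m-1)}{(2l-1)(2l+1)}}$, $B_l^{a,m}=A_{l+1}^{-a,m+a}$, $c_l=\sqrt{1+l^2/k}$ for $1\le l\le\Lambda$, $c_0=0$ (terms whose coefficient vanishes are absent). Set $x_3=x_0$, $x_1=(x_++x_-)/2$, $x_2=(x_+-x_-)/(2i)$, $\bm{x}^2=\sum_i x_i^2$. For a unit vector $\bm\chi$, $\langle A\rangle_{\bm\chi}=\langle\bm\chi,A\bm\chi\rangle$ and $(\Delta\bm{x})^2_{\bm\chi}=\langle\bm{x}^2\rangle_{\bm\chi}-\sum_i\langle x_i\rangle_{\bm\chi}^2$. *)

theory Defs
  imports "HOL-Analysis.Analysis"
begin

text \<open>A vector of the Hilbert space H_Lambda is represented by its
coefficient function (l,m) -> complex with respect to the orthonormal basis psi_l^m;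
only indices in fs_idx Lambda (0 <= l <= Lambda, |m| <= l) are meaningful.\<close>

definition fs_idx :: "nat \<Rightarrow> (nat \<times> int) set" where
  "fs_idx L = {(l, m). l \<le> L \<and> \<bar>m\<bar> \<le> int l}"

type_synonym fs_vec = "nat \<times> int \<Rightarrow> complex"

definition fs_c :: "real \<Rightarrow> nat \<Rightarrow> real" where
  "fs_c k l = (if l = 0 then 0 else sqrt (1 + (real l)\<^sup>2 / k))"

definition fs_A :: "nat \<Rightarrow> int \<Rightarrow> int \<Rightarrow> real" where
  "fs_A l a m = (if a = 0
     then sqrt ((real_of_int (int l + m) * real_of_int (int l - m)) / ((2 * real l + 1) * (2 * real l - 1)))
     else real_of_int a * sqrt ((real_of_int (int l - a * m) * real_of_int (int l - a * m - 1))
                                 / ((2 * real l - 1) * (2 * real l + 1))))"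

definition fs_B :: "nat \<Rightarrow> int \<Rightarrow> int \<Rightarrow> real" where
  "fs_B l a m = fs_A (l + 1) (- a) (m + a)"

text \<open>Image x_a psi_l^m of a basis vector (a in {0,1,-1}); the B-term is absent for l = Lambda,
  the A-term is absent for l = 0 (c_0 = 0); components outside fs_idx are dropped.\<close>
definition fs_x_basis :: "nat \<Rightarrow> real \<Rightarrow> int \<Rightarrow> nat \<Rightarrow> int \<Rightarrow> fs_vec" where
  "fs_x_basis L k a l m = (\<lambda>(l', m').
      if (l', m') \<in> fs_idx L \<and> m' = m + a then
        (if l' + 1 = l then complex_of_real (fs_c k l * fs_A l a m) else 0)
        + (if l' = l + 1 \<and> l < L then complex_of_real (fs_c k (l + 1) * fs_B l a m) else 0)
      else 0)"

definition fs_xa :: "nat \<Rightarrow> real \<Rightarrow> int \<Rightarrow> fs_vec \<Rightarrow> fs_vec" where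
  "fs_xa L k a v = (\<lambda>p. \<Sum>q\<in>fs_idx L. v q * fs_x_basis L k a (fst q) (snd q) p)"

definition fs_x :: "nat \<Rightarrow> real \<Rightarrow> nat \<Rightarrow> fs_vec \<Rightarrow> fs_vec" where
  "fs_x L k i v = (if i = 1 then (\<lambda>p. (fs_xa L k 1 v p + fs_xa L k (-1) v p) / 2)
                   else if i = 2 then (\<lambda>p. (fs_xa L k 1 v p - fs_xa L k (-1) v p) / (2 * \<i>))
                   else fs_xa L k 0 v)"

definition fs_inner :: "nat \<Rightarrow> fs_vec \<Rightarrow> fs_vec \<Rightarrow> complex" where
  "fs_inner L u w = (\<Sum>p\<in>fs_idx L. cnj (u p) * w p)"

definition fs_unit :: "nat \<Rightarrow> fs_vec \<Rightarrow> bool" where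
  "fs_unit L v \<longleftrightarrow> (\<forall>p. p \<notin> fs_idx L \<longrightarrow> v p = 0) \<and> fs_inner L v v = 1"

definition fs_expect :: "nat \<Rightarrow> (fs_vec \<Rightarrow> fs_vec) \<Rightarrow> fs_vec \<Rightarrow> complex" where
  "fs_expect L A chi = fs_inner L chi (A chi)"

text \<open>(Delta x)^2_chi = <x^2>_chi - sum_i <x_i>_chi^2, with x^2 = sum_i x_i x_i.
  The x_i are Hermitian, so this quantity is real; we take its real part.\<close>
definition fs_var :: "nat \<Rightarrow> real \<Rightarrow> fs_vec \<Rightarrow> real" where
  "fs_var L k chi = Re ((\<Sum>i\<in>{1,2,3}. fs_expect L (\<lambda>v. fs_x L k i (fs_x L k i v)) chi)
                       - (\<Sum>i\<in>{1,2,3}. (fs_expect L (fs_x L k i) chi)\<^sup>2))"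

definition fs_chi_tilde :: "nat \<Rightarrow> fs_vec" where
  "fs_chi_tilde L = (\<lambda>(l, m). if l \<le> L \<and> m = 0
       then complex_of_real (sqrt (2 / (real L + 2)) * sin ((real l + 1) * pi / (real L + 2)))
       else 0)"

end

theory Submission
  imports Defs
begin

definition vanish :: "nat \<Rightarrow> fs_vec \<Rightarrow> bool" where
  "vanish L v \<longleftrightarrow> (\<forall>p. p \<notin> fs_idx L \<longrightarrow> v p = 0)"

lemma finite_idx [simp]: "finite (fs_idx L)"
proof -
  have "fs_idx L \<subseteq> {0..L} \<times> {- int L..int L}" by (auto simp: fs_idx_def)
  then show ?thesis by (rule finite_subset) auto
qed

lemma basis_split:
  assumes "(l', m') \<in> fs_idx L"
  shows "fs_x_basis L k a l m (l', m') =
     (if (l, m) = (l' + 1, m' - a) then complex_of_real (fs_c k l * fs_A l a m) else 0)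
   + (if l' \<ge> 1 \<and> (l, m) = (l' - 1, m' - a) then complex_of_real (fs_c k (l + 1) * fs_B l a m) else 0)"
  using assms by (auto simp: fs_x_basis_def fs_idx_def)

lemma xa_coord:
  assumes "vanish L v"
  shows "fs_xa L k a v (l', m') = (if (l', m') \<in> fs_idx L then
      v (l' + 1, m' - a) * complex_of_real (fs_c k (l' + 1) * fs_A (l' + 1) a (m' - a))
    + (if l' \<ge> 1 then v (l' - 1, m' - a) * complex_of_real (fs_c k l' * fs_B (l' - 1) a (m' - a)) else 0)
    else 0)"
proof (cases "(l', m') \<in> fs_idx L")
  case False
  then show ?thesis by (simp add: fs_xa_def fs_x_basis_def)
next
  case True
  have "fs_xa L k a v (l', m') = (\<Sum>q\<in>fs_idx L.
      (if q = (l' + 1, m' - a) then v q * complex_of_real (fs_c k (fst q) * fs_A (fst q) a (snd q)) else 0)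
    + (if l' \<ge> 1 then (if q = (l' - 1, m' - a) then v q * complex_of_real (fs_c k (fst q + 1) * fs_B (fst q) a (snd q)) else 0) else 0))"
    unfolding fs_xa_def
    by (rule sum.cong[OF refl], subst basis_split[OF True], auto simp: distrib_left)
  also have "\<dots> = (if (l' + 1, m' - a) \<in> fs_idx L then v (l' + 1, m' - a) * complex_of_real (fs_c k (l' + 1) * fs_A (l' + 1) a (m' - a)) else 0)
     + (if l' \<ge> 1 \<and> (l' - 1, m' - a) \<in> fs_idx L then v (l' - 1, m' - a) * complex_of_real (fs_c k l' * fs_B (l' - 1) a (m' - a)) else 0)"
    apply (simp only: sum.distrib)
    apply (cases "l' \<ge> 1")
     apply (simp add: sum.delta)
    apply (simp add: sum.delta)
    done
  finally have X: "fs_xa L k a v (l', m') = (if (l' + 1, m' - a) \<in> fs_idx L then v (l' + 1, m' - a) * complex_of_real (fs_c k (l' + 1) * fs_A (l' + 1) a (m' - a)) else 0)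
     + (if l' \<ge> 1 \<and> (l' - 1, m' - a) \<in> fs_idx L then v (l' - 1, m' - a) * complex_of_real (fs_c k l' * fs_B (l' - 1) a (m' - a)) else 0)" .
  show ?thesis
    using X assms True unfolding vanish_def by auto
qed

lemma vanish_xa: "vanish L (fs_xa L k a v)"
  by (auto simp: vanish_def fs_xa_def fs_x_basis_def)

lemma vanish_x: "vanish L (fs_x L k i v)"
  using vanish_xa[of L k _ v] by (auto simp: vanish_def fs_x_def)

definition sq :: "nat \<Rightarrow> nat \<Rightarrow> real" where
  "sq L l = sqrt (2 / (real L + 2)) * sin ((real l + 1) * pi / (real L + 2))"

lemma sq_L1: "sq L (L + 1) = 0"
proof -
  have "(real (L + 1) + 1) * pi / (real L + 2) = pi" by (simp add: field_simps)
  then show ?thesis by (simp add: sq_def)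
qed

lemma chi_eq: "fs_chi_tilde L (l, m) = (if l \<le> L \<and> m = 0 then complex_of_real (sq L l) else 0)"
  by (simp add: fs_chi_tilde_def sq_def)

lemma chi_0: "l \<le> L + 1 \<Longrightarrow> fs_chi_tilde L (l, 0) = complex_of_real (sq L l)"
  using sq_L1[of L] by (cases "l = L + 1") (auto simp: chi_eq)

lemma vanish_chi: "vanish L (fs_chi_tilde L)"
  by (auto simp: vanish_def chi_eq fs_idx_def)

definition W :: "nat \<Rightarrow> real \<Rightarrow> int \<Rightarrow> nat \<Rightarrow> real" where
  "W L k a l' = sq L (l' + 1) * fs_c k (l' + 1) * fs_A (l' + 1) a 0
     + (if l' \<ge> 1 then sq L (l' - 1) * fs_c k l' * fs_B (l' - 1) a 0 else 0)"

lemma xa_chi: "fs_xa L k a (fs_chi_tilde L) (l', m') =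
   (if (l', m') \<in> fs_idx L \<and> m' = a then complex_of_real (W L k a l') else 0)"
proof (cases "(l', m') \<in> fs_idx L \<and> m' = a")
  case True
  then have "l' \<le> L" by (auto simp: fs_idx_def)
  then show ?thesis using True
    by (simp add: xa_coord[OF vanish_chi] chi_0 W_def)
next
  case False
  then show ?thesis
    by (auto simp add: xa_coord[OF vanish_chi] chi_eq)
qed

lemma idx_iff: "(a, b) \<in> fs_idx L \<longleftrightarrow> a \<le> L \<and> \<bar>b\<bar> \<le> int a"
  by (simp add: fs_idx_def)

lemma x33: assumes "l \<le> L"
  shows "fs_x L k 3 (fs_x L k 3 (fs_chi_tilde L)) (l, 0) = complex_of_real (
     (if l + 1 \<le> L then W L k 0 (l + 1) * fs_c k (l + 1) * fs_A (l + 1) 0 0 else 0)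
   + (if l \<ge> 1 then W L k 0 (l - 1) * fs_c k l * fs_B (l - 1) 0 0 else 0))"
  using assms
  by (auto simp add: fs_x_def xa_coord[OF vanish_xa] xa_chi idx_iff)

definition G :: "nat \<Rightarrow> real \<Rightarrow> nat \<Rightarrow> real" where
  "G L k l = (if l + 1 \<le> L then W L k (-1) (l + 1) * fs_c k (l + 1) * fs_A (l + 1) 1 (-1) else 0)
    + (if l \<ge> 2 then W L k (-1) (l - 1) * fs_c k l * fs_B (l - 1) 1 (-1) else 0)
    + (if l + 1 \<le> L then W L k 1 (l + 1) * fs_c k (l + 1) * fs_A (l + 1) (-1) 1 else 0)
    + (if l \<ge> 2 then W L k 1 (l - 1) * fs_c k l * fs_B (l - 1) (-1) 1 else 0)"

lemma x11: assumes "l \<le> L"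
  shows "fs_x L k 1 (fs_x L k 1 (fs_chi_tilde L)) (l, 0) = complex_of_real (G L k l / 4)"
proof -
  have v: "vanish L (\<lambda>p. (fs_xa L k 1 (fs_chi_tilde L) p + fs_xa L k (-1) (fs_chi_tilde L) p) / 2)"
    using vanish_xa[of L k 1 "fs_chi_tilde L"] vanish_xa[of L k "-1" "fs_chi_tilde L"]
    by (auto simp: vanish_def)
  show ?thesis using assms le_trans[OF diff_le_self[of l "Suc 0"] assms]
    by (simp add: fs_x_def xa_coord[OF v] xa_chi idx_iff G_def field_simps)
qed

lemma x22: assumes "l \<le> L"
  shows "fs_x L k 2 (fs_x L k 2 (fs_chi_tilde L)) (l, 0) = complex_of_real (G L k l / 4)"
proof -
  define V where "V = (\<lambda>p. (fs_xa L k 1 (fs_chi_tilde L) p - fs_xa L k (-1) (fs_chi_tilde L) p) / (2 * \<i>))"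
  have v: "vanish L V"
    using vanish_xa[of L k 1 "fs_chi_tilde L"] vanish_xa[of L k "-1" "fs_chi_tilde L"]
    by (auto simp: vanish_def V_def)
  have e: "fs_x L k 2 (fs_x L k 2 (fs_chi_tilde L)) (l, 0) = (fs_xa L k 1 V (l, 0) - fs_xa L k (-1) V (l, 0)) / (2 * \<i>)"
    by (simp add: fs_x_def V_def)
  show ?thesis using assms le_trans[OF diff_le_self[of l "Suc 0"] assms] unfolding e xa_coord[OF v]
    by (simp add: V_def xa_chi idx_iff G_def field_simps)
qed

definition Z :: "nat \<Rightarrow> real" where "Z n = sqrt (real n ^ 2 / ((2 * real n + 1) * (2 * real n - 1)))"
definition P :: "nat \<Rightarrow> real" where "P n = sqrt (real n * (real n - 1) / ((2 * real n - 1) * (2 * real n + 1)))"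
definition Q :: "nat \<Rightarrow> real" where "Q n = sqrt ((real n + 1) * real n / ((2 * real n - 1) * (2 * real n + 1)))"

lemma A00: "fs_A n 0 0 = Z n" by (simp add: fs_A_def Z_def power2_eq_square)
lemma A10: "fs_A n 1 0 = P n" by (simp add: fs_A_def P_def)
lemma Am10: "fs_A n (-1) 0 = - P n" by (simp add: fs_A_def P_def)
lemma A1m1: "fs_A n 1 (-1) = Q n" by (simp add: fs_A_def Q_def algebra_simps)
lemma Am11: "fs_A n (-1) 1 = - Q n" by (simp add: fs_A_def Q_def algebra_simps)

lemma ZP: "Z n * Z (n + 1) = Q n * P (n + 1)"
proof -
  have "Z n * Z (n + 1) = sqrt (real n ^ 2 / ((2 * real n + 1) * (2 * real n - 1)) * ((real n + 1) ^ 2 / ((2 * real n + 3) * (2 * real n + 1))))"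
    by (simp add: Z_def real_sqrt_mult[symmetric] algebra_simps)
  also have "\<dots> = sqrt ((real n + 1) * real n / ((2 * real n - 1) * (2 * real n + 1)) * ((real n + 1) * real n / ((2 * real n + 1) * (2 * real n + 3))))"
    by (rule arg_cong[where f = sqrt]) (simp add: field_simps power2_eq_square)
  also have "\<dots> = Q n * P (n + 1)"
    by (simp add: Q_def P_def real_sqrt_mult[symmetric] algebra_simps)
  finally show ?thesis .
qed

lemma ZQ: "n \<ge> 1 \<Longrightarrow> Z n ^ 2 + Q n ^ 2 = real n / (2 * real n - 1)"
proof -
  assume n: "n \<ge> 1"
  then have p: "(2 * real n - 1) > 0" by simp
  have "Z n ^ 2 = real n ^ 2 / ((2 * real n + 1) * (2 * real n - 1))"
    unfolding Z_def using p by (subst real_sqrt_pow2) auto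
  moreover have "Q n ^ 2 = (real n + 1) * real n / ((2 * real n - 1) * (2 * real n + 1))"
    unfolding Q_def using p by (subst real_sqrt_pow2) auto
  moreover have "real n ^ 2 / ((2 * real n + 1) * (2 * real n - 1)) + (real n + 1) * real n / ((2 * real n - 1) * (2 * real n + 1)) = real n / (2 * real n - 1)"
  proof -
    have a: "2 * real n - 1 \<noteq> 0" "2 * real n + 1 \<noteq> 0" using p by auto
    show ?thesis using a by (simp add: divide_simps) (simp add: algebra_simps power2_eq_square)
  qed
  ultimately show ?thesis by simp
qed

lemma ZPsq: "n \<ge> 1 \<Longrightarrow> Z n ^ 2 + P n ^ 2 = real n / (2 * real n + 1)"
proof -
  assume n: "n \<ge> 1"
  then have p: "(2 * real n - 1) > 0" and q: "real n - 1 \<ge> 0" by auto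
  have "Z n ^ 2 = real n ^ 2 / ((2 * real n + 1) * (2 * real n - 1))"
    unfolding Z_def using p by (subst real_sqrt_pow2) auto
  moreover have "P n ^ 2 = real n * (real n - 1) / ((2 * real n - 1) * (2 * real n + 1))"
    unfolding P_def using p q by (subst real_sqrt_pow2) auto
  moreover have "real n ^ 2 / ((2 * real n + 1) * (2 * real n - 1)) + real n * (real n - 1) / ((2 * real n - 1) * (2 * real n + 1)) = real n / (2 * real n + 1)"
  proof -
    have a: "2 * real n - 1 \<noteq> 0" "2 * real n + 1 \<noteq> 0" using p by auto
    show ?thesis using a by (simp add: divide_simps) (simp add: algebra_simps power2_eq_square)
  qed
  ultimately show ?thesis by simp
qed

lemma P1: "P 1 = 0" by (simp add: P_def)
lemma P1s: "P (Suc 0) = 0" by (simp add: P_def)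

definition T3 :: "nat \<Rightarrow> real \<Rightarrow> nat \<Rightarrow> real" where
  "T3 L k l = (if l + 1 \<le> L then W L k 0 (l + 1) * fs_c k (l + 1) * fs_A (l + 1) 0 0 else 0)
   + (if l \<ge> 1 then W L k 0 (l - 1) * fs_c k l * fs_B (l - 1) 0 0 else 0)"

definition D :: "nat \<Rightarrow> real \<Rightarrow> nat \<Rightarrow> real" where
  "D L k l = (if l < L then fs_c k (l + 1) ^ 2 * (real l + 1) / (2 * real l + 1) else 0)
           + (if l \<ge> 1 then fs_c k l ^ 2 * real l / (2 * real l + 1) else 0)"

lemma key_gen:
  assumes "Suc (Suc j) < L"
  shows "G L k (Suc (Suc j)) / 2 + T3 L k (Suc (Suc j)) = D L k (Suc (Suc j)) * sq L (Suc (Suc j))"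
proof -
  let ?l = "Suc (Suc j)"
  have "G L k ?l / 2 + T3 L k ?l =
     sq L ?l * (fs_c k (?l+1) ^ 2 * (Z (?l+1) ^ 2 + Q (?l+1) ^ 2) + fs_c k ?l ^ 2 * (Z ?l ^ 2 + P ?l ^ 2))
   + sq L (?l + 2) * fs_c k (?l+1) * fs_c k (?l+2) * (Z (?l+1) * Z (?l+1+1) - Q (?l+1) * P (?l+1+1))
   + sq L j * fs_c k (j+1) * fs_c k ?l * (Z (j+1) * Z (j+1+1) - Q (j+1) * P (j+1+1))"
    using assms
    by (simp add: G_def T3_def W_def fs_B_def A00 A10 Am10 A1m1 Am11 field_simps power2_eq_square)
  also have "\<dots> = D L k ?l * sq L ?l"
    using assms by (simp only: ZP ZQ ZPsq) (simp add: D_def field_simps)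
  finally show ?thesis .
qed

lemma key_top:
  assumes "Suc (Suc j) = L"
  shows "G L k (Suc (Suc j)) / 2 + T3 L k (Suc (Suc j)) = D L k (Suc (Suc j)) * sq L (Suc (Suc j))"
proof -
  let ?l = "Suc (Suc j)"
  have "G L k ?l / 2 + T3 L k ?l =
     sq L ?l * (fs_c k ?l ^ 2 * (Z ?l ^ 2 + P ?l ^ 2))
   + sq L j * fs_c k (j+1) * fs_c k ?l * (Z (j+1) * Z (j+1+1) - Q (j+1) * P (j+1+1))"
    using assms[symmetric]
    by (simp add: G_def T3_def W_def fs_B_def A00 A10 Am10 A1m1 Am11 field_simps power2_eq_square)
  also have "\<dots> = D L k ?l * sq L ?l"
    using assms[symmetric] by (simp only: ZP ZQ ZPsq) (simp add: D_def field_simps)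
  finally show ?thesis .
qed

lemma key_0:
  assumes "0 < L"
  shows "G L k 0 / 2 + T3 L k 0 = D L k 0 * sq L 0"
proof -
  have "G L k 0 / 2 + T3 L k 0 =
     sq L 0 * (fs_c k 1 ^ 2 * (Z 1 ^ 2 + Q 1 ^ 2))
   + sq L 2 * fs_c k 1 * fs_c k 2 * (Z 1 * Z (1+1) - Q 1 * P (1+1))"
    using assms
    by (simp add: G_def T3_def W_def fs_B_def A00 A10 Am10 A1m1 Am11 field_simps power2_eq_square numeral_2_eq_2)
  also have "\<dots> = D L k 0 * sq L 0"
    using assms by (simp only: ZP ZQ ZPsq) (simp add: D_def field_simps)
  finally show ?thesis .
qed

lemma key_1:
  assumes "1 < L"
  shows "G L k 1 / 2 + T3 L k 1 = D L k 1 * sq L 1"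
proof -
  have "G L k 1 / 2 + T3 L k 1 =
     sq L 1 * (fs_c k 2 ^ 2 * (Z 2 ^ 2 + Q 2 ^ 2) + fs_c k 1 ^ 2 * (Z 1 ^ 2 + P 1 ^ 2))
   + sq L 3 * fs_c k 2 * fs_c k 3 * (Z 2 * Z (2+1) - Q 2 * P (2+1))"
    using assms
    by (simp add: G_def T3_def W_def fs_B_def A00 A10 Am10 A1m1 Am11 P1 P1s field_simps power2_eq_square numeral_2_eq_2 numeral_3_eq_3)
  also have "\<dots> = D L k 1 * sq L 1"
    using assms by (simp only: ZP ZQ ZPsq) (simp add: D_def field_simps P1 numeral_2_eq_2)
  finally show ?thesis .
qed

lemma key:
  assumes "3 \<le> L" "l \<le> L"
  shows "G L k l / 2 + T3 L k l = D L k l * sq L l"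
proof -
  consider "l = 0" | "l = 1" | j where "l = Suc (Suc j)" "l < L" | j where "l = Suc (Suc j)" "l = L"
    using assms by (metis less_le not0_implies_Suc One_nat_def)
  then show ?thesis
    using assms key_0 key_1 key_gen key_top by cases auto
qed

lemma inner_chi: "fs_inner L (fs_chi_tilde L) y = (\<Sum>l\<le>L. complex_of_real (sq L l) * y (l, 0))"
proof -
  have sub: "(\<lambda>l. (l, 0::int)) ` {..L} \<subseteq> fs_idx L" by (auto simp: fs_idx_def)
  have "fs_inner L (fs_chi_tilde L) y = (\<Sum>p\<in>(\<lambda>l. (l, 0::int)) ` {..L}. cnj (fs_chi_tilde L p) * y p)"
    unfolding fs_inner_def
    by (rule sum.mono_neutral_right) (use sub in \<open>auto simp: chi_eq\<close>)
  also have "\<dots> = (\<Sum>l\<le>L. cnj (fs_chi_tilde L (l, 0)) * y (l, 0))"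
    by (subst sum.reindex) (auto simp: inj_on_def)
  also have "\<dots> = (\<Sum>l\<le>L. complex_of_real (sq L l) * y (l, 0))"
    by (rule sum.cong) (auto simp: chi_eq)
  finally show ?thesis .
qed

lemma var_formula:
  assumes "3 \<le> L"
  shows "fs_var L k (fs_chi_tilde L) = (\<Sum>l\<le>L. sq L l ^ 2 * D L k l) - (\<Sum>l\<le>L. sq L l * W L k 0 l) ^ 2"
proof -
  have e2: "(\<Sum>i\<in>{1,2,3}. fs_expect L (\<lambda>v. fs_x L k i (fs_x L k i v)) (fs_chi_tilde L))
      = complex_of_real (\<Sum>l\<le>L. sq L l ^ 2 * D L k l)"
  proof -
    have s3: "(\<Sum>i\<in>{1,2,3::nat}. f i) = f 1 + f 2 + f 3" for f :: "nat \<Rightarrow> complex"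
      by (simp add: numeral_2_eq_2 numeral_3_eq_3)
    have a1: "fs_expect L (\<lambda>v. fs_x L k 1 (fs_x L k 1 v)) (fs_chi_tilde L) = (\<Sum>l\<le>L. complex_of_real (sq L l) * complex_of_real (G L k l / 4))"
      unfolding fs_expect_def inner_chi by (rule sum.cong) (simp_all add: x11 del: One_nat_def)
    have a2: "fs_expect L (\<lambda>v. fs_x L k 2 (fs_x L k 2 v)) (fs_chi_tilde L) = (\<Sum>l\<le>L. complex_of_real (sq L l) * complex_of_real (G L k l / 4))"
      unfolding fs_expect_def inner_chi by (rule sum.cong) (simp_all add: x22)
    have a3: "fs_expect L (\<lambda>v. fs_x L k 3 (fs_x L k 3 v)) (fs_chi_tilde L) = (\<Sum>l\<le>L. complex_of_real (sq L l) * complex_of_real (T3 L k l))"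
      unfolding fs_expect_def inner_chi by (rule sum.cong) (simp_all add: x33 T3_def)
    have "(\<Sum>i\<in>{1,2,3}. fs_expect L (\<lambda>v. fs_x L k i (fs_x L k i v)) (fs_chi_tilde L))
       = (\<Sum>l\<le>L. complex_of_real (sq L l) * complex_of_real (G L k l / 4))
       + (\<Sum>l\<le>L. complex_of_real (sq L l) * complex_of_real (G L k l / 4))
       + (\<Sum>l\<le>L. complex_of_real (sq L l) * complex_of_real (T3 L k l))"
      unfolding s3 a1 a2 a3 ..
    also have "\<dots> = complex_of_real (\<Sum>l\<le>L. sq L l * (G L k l / 2 + T3 L k l))"
      by (simp add: sum.distrib[symmetric] algebra_simps)
    also have "\<dots> = complex_of_real (\<Sum>l\<le>L. sq L l ^ 2 * D L k l)"
      using key[OF assms] by (simp add: power2_eq_square mult_ac)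
    finally show ?thesis .
  qed
  have s3: "(\<Sum>i\<in>{1,2,3::nat}. f i) = f 1 + f 2 + f 3" for f :: "nat \<Rightarrow> complex"
    by (simp add: numeral_2_eq_2 numeral_3_eq_3)
  have b1: "fs_expect L (fs_x L k 1) (fs_chi_tilde L) = 0"
    unfolding fs_expect_def inner_chi by (rule sum.neutral) (simp add: fs_x_def xa_chi)
  have b2: "fs_expect L (fs_x L k 2) (fs_chi_tilde L) = 0"
    unfolding fs_expect_def inner_chi by (rule sum.neutral) (simp add: fs_x_def xa_chi)
  have b3: "fs_expect L (fs_x L k 3) (fs_chi_tilde L) = complex_of_real (\<Sum>l\<le>L. sq L l * W L k 0 l)"
    unfolding fs_expect_def inner_chi by (simp add: fs_x_def xa_chi idx_iff)
  show ?thesis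
    unfolding fs_var_def e2 s3 b1 b2 b3
    by simp
qed

lemma sum_cos_tele: "2 * sin t * (\<Sum>l<n. cos (2 * (real l + 1) * t)) = sin ((2 * real n + 1) * t) - sin t"
proof (induction n)
  case 0 then show ?case by simp
next
  case (Suc n)
  have "sin ((2 * real (Suc n) + 1) * t) - sin ((2 * real n + 1) * t) = 2 * sin t * cos (2 * (real n + 1) * t)"
  proof -
    have a: "((2 * real (Suc n) + 1) * t - (2 * real n + 1) * t) / 2 = t" by (simp add: field_simps)
    have b: "((2 * real (Suc n) + 1) * t + (2 * real n + 1) * t) / 2 = 2 * (real n + 1) * t" by (simp add: field_simps)
    show ?thesis by (simp only: sin_diff_sin a b)
  qed
  then show ?case using Suc by (simp add: algebra_simps)
qed

lemma sq_alt: "sq L l = sqrt (2 / (real L + 2)) * sin ((real l + 1) * (pi / (real L + 2)))"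
  by (simp add: sq_def)

lemma sum_sin_sq:
  "(\<Sum>l\<le>L. sin ((real l + 1) * (pi / (real L + 2))) ^ 2) = (real L + 2) / 2"
proof -
  define t where "t = pi / (real L + 2)"
  have "pi * 1 < pi * (real L + 2)" by (intro mult_strict_left_mono) auto
  then have tpos: "0 < t" "t < pi" unfolding t_def by (auto simp: divide_less_eq)
  then have st: "sin t > 0" by (simp add: sin_gt_zero)
  have "sin ((2 * real (L + 1) + 1) * t) = sin (2 * pi - t)"
    unfolding t_def by (rule arg_cong[where f = sin]) (simp add: field_simps)
  also have "\<dots> = - sin t" by simp
  finally have e: "sin ((2 * real (L + 1) + 1) * t) = - sin t" .
  have h: "2 * sin t * (\<Sum>l<L + 1. cos (2 * (real l + 1) * t)) = 2 * sin t * (-1)"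
    using sum_cos_tele[of t "L + 1"] e by simp
  have c: "(\<Sum>l<L + 1. cos (2 * (real l + 1) * t)) = -1"
    using h st by (subst (asm) mult_cancel_left) simp
  have "(\<Sum>l\<le>L. sin ((real l + 1) * t) ^ 2) = (\<Sum>l<L + 1. (1 - cos (2 * (real l + 1) * t)) / 2)"
  proof (rule sum.cong)
    fix l assume "l \<in> {..<L + 1}"
    have "cos (2 * (real l + 1) * t) = 1 - 2 * sin ((real l + 1) * t) ^ 2"
      using cos_double_sin[of "(real l + 1) * t"] by (simp only: mult.assoc)
    then show "sin ((real l + 1) * t) ^ 2 = (1 - cos (2 * (real l + 1) * t)) / 2" by simp
  qed (auto)
  also have "\<dots> = (real L + 1) / 2 - (\<Sum>l<L + 1. cos (2 * (real l + 1) * t)) / 2"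
    by (simp only: diff_divide_distrib sum_subtractf sum_divide_distrib[symmetric]) simp
  also have "\<dots> = (real L + 2) / 2" using c by simp
  finally show ?thesis unfolding t_def .
qed

lemma sum_sq_sq: "(\<Sum>l\<le>L. sq L l ^ 2) = 1"
proof -
  have "(\<Sum>l\<le>L. sq L l ^ 2) = (2 / (real L + 2)) * (\<Sum>l\<le>L. sin ((real l + 1) * (pi / (real L + 2))) ^ 2)"
    by (simp add: sq_alt power_mult_distrib sum_distrib_left)
  also have "\<dots> = 1" by (subst sum_sin_sq) simp
  finally show ?thesis .
qed

lemma sq_nonneg: assumes "l \<le> L + 1" shows "0 \<le> sq L l"
proof -
  have "real l + 1 \<le> real L + 2" using assms by simp
  then have "pi * (real l + 1) \<le> pi * (real L + 2)" by (intro mult_left_mono) auto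
  then have "(real l + 1) * pi / (real L + 2) \<le> pi" by (simp add: divide_le_eq mult.commute)
  then show ?thesis unfolding sq_def
    by (intro mult_nonneg_nonneg sin_ge_zero) auto
qed

lemma sq_rec: "sq L (l + 2) + sq L l = 2 * cos (pi / (real L + 2)) * sq L (l + 1)"
proof -
  define t where "t = pi / (real L + 2)"
  have a: "((real (l + 2) + 1) * t + (real l + 1) * t) / 2 = (real (l + 1) + 1) * t" by (simp add: field_simps)
  have b: "((real (l + 2) + 1) * t - (real l + 1) * t) / 2 = t" by (simp add: field_simps)
  have "sin ((real (l + 2) + 1) * t) + sin ((real l + 1) * t) = 2 * sin ((real (l + 1) + 1) * t) * cos t"
    by (simp only: sin_plus_sin a b)
  then have "sqrt (2 / (real L + 2)) * (sin ((real (l + 2) + 1) * t) + sin ((real l + 1) * t)) = sqrt (2 / (real L + 2)) * (2 * sin ((real (l + 1) + 1) * t) * cos t)"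
    by simp
  then show ?thesis unfolding sq_alt t_def[symmetric] by (simp add: algebra_simps)
qed

lemma sq01: "sq L 0 * sq L 1 = 2 * (2 / (real L + 2)) * sin (pi / (real L + 2)) ^ 2 * cos (pi / (real L + 2))"
proof -
  have "sin (2 * (pi / (real L + 2))) = 2 * sin (pi / (real L + 2)) * cos (pi / (real L + 2))"
    by (rule sin_double)
  then show ?thesis
    by (simp add: sq_alt power2_eq_square algebra_simps)
qed

lemma sqL: "sq L L = sqrt (2 / (real L + 2)) * sin (pi / (real L + 2))"
proof -
  have "sin ((real L + 1) * (pi / (real L + 2))) = sin (pi - pi / (real L + 2))"
    by (rule arg_cong[where f = sin]) (simp add: field_simps)
  then show ?thesis by (simp add: sq_alt)
qed

lemma c_sq: "0 < k \<Longrightarrow> 1 \<le> n \<Longrightarrow> fs_c k n ^ 2 = 1 + real n ^ 2 / k"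
  by (simp add: fs_c_def add_pos_nonneg)

lemma c_ge1: "0 < k \<Longrightarrow> 1 \<le> n \<Longrightarrow> 1 \<le> fs_c k n"
  by (simp add: fs_c_def)

lemma Z_ge: assumes "1 \<le> n" shows "1/2 \<le> Z n"
proof -
  have p: "(2 * real n + 1) * (2 * real n - 1) > 0" using assms by (simp add: mult_pos_pos)
  have "1/4 \<le> real n ^ 2 / ((2 * real n + 1) * (2 * real n - 1))"
    using p by (simp add: divide_simps) (simp add: algebra_simps power2_eq_square)
  then have "sqrt (1/4) \<le> Z n" unfolding Z_def by (rule real_sqrt_le_mono)
  moreover have "sqrt (1/4::real) = 1/2" by (simp add: real_sqrt_divide)
  ultimately show ?thesis by simp
qed

lemma Z1: "577/1000 \<le> Z 1"
proof -
  have "sqrt ((577/1000)^2) \<le> Z 1" unfolding Z_def by (rule real_sqrt_le_mono) (simp add: power_divide)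
  then show ?thesis by simp
qed

lemma D_lt: assumes "l < L" "0 < k" shows "D L k l = 1 + (real l ^ 2 + real l + 1) / k"
proof (cases "l = 0")
  case True then show ?thesis using assms by (simp add: D_def c_sq)
next
  case False
  then have "1 \<le> l" by simp
  have h1: "fs_c k (l + 1) ^ 2 = 1 + real (l + 1) ^ 2 / k" using assms by (simp add: c_sq)
  have h2: "fs_c k l ^ 2 = 1 + real l ^ 2 / k" using assms \<open>1 \<le> l\<close> by (simp add: c_sq)
  have "D L k l = (1 + real (l + 1) ^ 2 / k) * (real l + 1) / (2 * real l + 1) + (1 + real l ^ 2 / k) * real l / (2 * real l + 1)"
    using assms \<open>1 \<le> l\<close> unfolding D_def h1 h2 by simp
  also have "\<dots> = 1 + (real l ^ 2 + real l + 1) / k"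
  proof -
    have nz: "k \<noteq> 0" "2 * real l + 1 \<noteq> 0" using assms by auto
    show ?thesis using nz by (simp add: divide_simps) (simp add: algebra_simps power2_eq_square)
  qed
  finally show ?thesis .
qed

lemma D_top: assumes "1 \<le> L" "0 < k" shows "D L k L = (1 + real L ^ 2 / k) * real L / (2 * real L + 1)"
  using assms by (simp add: D_def c_sq)

lemma sum_quad: "(\<Sum>l<L. real l ^ 2 + real l + 1) = real L * (real L ^ 2 + 2) / 3"
  by (induction L) (simp_all add: field_simps power2_eq_square)

lemma sq_sq_le: "sq L l ^ 2 \<le> 2 / (real L + 2)"
proof -
  have "sq L l ^ 2 = 2 / (real L + 2) * sin ((real l + 1) * pi / (real L + 2)) ^ 2"
    by (simp add: sq_def power_mult_distrib)
  also have "\<dots> \<le> 2 / (real L + 2) * 1"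
    by (intro mult_left_mono) (auto simp: abs_square_le_1)
  finally show ?thesis by simp
qed

lemma E2_bound:
  assumes "3 \<le> L" "0 < k"
  shows "(\<Sum>l\<le>L. sq L l ^ 2 * D L k l) \<le> 1 - sq L L ^ 2 * (1 - D L k L)
     + 2 / (real L + 2) * (\<Sum>l<L. real l ^ 2 + real l + 1) / k"
proof -
  have split: "(\<Sum>l\<le>L. f l) = (\<Sum>l<L. f l) + f L" for f :: "nat \<Rightarrow> real"
    by (simp add: lessThan_Suc_atMost[symmetric])
  have a: "(\<Sum>l<L. sq L l ^ 2 * D L k l) = (\<Sum>l<L. sq L l ^ 2) + (\<Sum>l<L. sq L l ^ 2 * ((real l ^ 2 + real l + 1) / k))"
    by (simp add: sum.distrib[symmetric] D_lt assms(2) algebra_simps)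
  have b: "(\<Sum>l<L. sq L l ^ 2) = 1 - sq L L ^ 2"
    using sum_sq_sq[of L] split[of "\<lambda>l. sq L l ^ 2"] by simp
  have c: "(\<Sum>l<L. sq L l ^ 2 * ((real l ^ 2 + real l + 1) / k)) \<le> (\<Sum>l<L. 2 / (real L + 2) * ((real l ^ 2 + real l + 1) / k))"
    by (intro sum_mono mult_right_mono sq_sq_le) (use assms in auto)
  have d: "(\<Sum>l<L. 2 / (real L + 2) * ((real l ^ 2 + real l + 1) / k)) = 2 / (real L + 2) * (\<Sum>l<L. real l ^ 2 + real l + 1) / k"
    by (simp add: sum_distrib_left sum_divide_distrib)
  show ?thesis unfolding split[of "\<lambda>l. sq L l ^ 2 * D L k l"] a b
    using c d by (simp add: algebra_simps)
qed

lemma cZ: assumes "0 < k" "1 \<le> n" shows "1/2 \<le> fs_c k n * Z n"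
proof -
  have "0 \<le> fs_c k n" using c_ge1[OF assms] by linarith
  then show ?thesis using mult_mono[OF c_ge1[OF assms] Z_ge[OF assms(2)]] by simp
qed

lemma W0_eq: "W L k 0 l = sq L (l + 1) * fs_c k (l + 1) * Z (l + 1) + (if l \<ge> 1 then sq L (l - 1) * fs_c k l * Z l else 0)"
  by (simp add: W_def fs_B_def A00)

lemma X_bound:
  assumes "3 \<le> L" "0 < k"
  shows "cos (pi / (real L + 2)) + 2 * ((fs_c k 1 * Z 1 - 1/2) * (sq L 0 * sq L 1)) \<le> (\<Sum>l\<le>L. sq L l * W L k 0 l)"
proof -
  define C where "C = cos (pi / (real L + 2))"
  define a where "a = (fs_c k 1 * Z 1 - 1/2) * (sq L 0 * sq L 1)"
  have sd: "sin (2 * pi / (real L + 2)) = 2 * sin (pi / (real L + 2)) * cos (pi / (real L + 2))"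
    using sin_double[of "pi / (real L + 2)"] by simp
  have s1: "sq L 1 = 2 * C * sq L 0"
    unfolding C_def by (simp add: sq_def sd)
  have pt: "C * sq L l ^ 2 + ((if l = 0 then a else 0) + (if l = 1 then a else 0)) \<le> sq L l * W L k 0 l"
    if l: "l \<le> L" for l
  proof (cases "l = 0")
    case True
    then show ?thesis using s1 by (simp add: W0_eq a_def power2_eq_square algebra_simps)
  next
    case False
    then have l1: "1 \<le> l" by simp
    have rec: "sq L (l + 1) + sq L (l - 1) = 2 * C * sq L l"
      using sq_rec[of L "l - 1"] l1 unfolding C_def by simp
    have nn: "0 \<le> sq L l" "0 \<le> sq L (l + 1)" "0 \<le> sq L (l - 1)"
      using l by (auto intro: sq_nonneg)
    have m1: "sq L l * sq L (l + 1) * (1/2) \<le> sq L l * sq L (l + 1) * (fs_c k (l + 1) * Z (l + 1))"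
      using nn cZ[OF assms(2), of "l + 1"] by (intro mult_left_mono) auto
    have m2: "sq L l * sq L (l - 1) * (1/2) + (if l = 1 then a else 0) \<le> sq L l * sq L (l - 1) * (fs_c k l * Z l)"
    proof (cases "l = 1")
      case True then show ?thesis by (simp add: a_def algebra_simps)
    next
      case False
      have "0 \<le> sq L l * sq L (l - 1)" using nn by simp
      then have "sq L l * sq L (l - 1) * (1/2) \<le> sq L l * sq L (l - 1) * (fs_c k l * Z l)"
        using cZ[OF assms(2) l1] by (intro mult_left_mono)
      then show ?thesis using False by simp
    qed
    have "C * sq L l ^ 2 = sq L l * (sq L (l + 1) + sq L (l - 1)) / 2"
      unfolding rec by (simp add: power2_eq_square)
    then have "C * sq L l ^ 2 = sq L l * sq L (l + 1) * (1/2) + sq L l * sq L (l - 1) * (1/2)"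
      by (simp add: algebra_simps)
    then show ?thesis using m1 m2 False l1
      by (simp add: W0_eq algebra_simps)
  qed
  have "(\<Sum>l\<le>L. C * sq L l ^ 2 + ((if l = 0 then a else 0) + (if l = 1 then a else 0))) \<le> (\<Sum>l\<le>L. sq L l * W L k 0 l)"
    by (rule sum_mono) (use pt in auto)
  moreover have "(\<Sum>l\<le>L. C * sq L l ^ 2 + ((if l = 0 then a else 0) + (if l = 1 then a else 0))) = C + 2 * a"
    using assms(1) by (simp add: sum.distrib sum_distrib_left[symmetric] sum_sq_sq)
  ultimately show ?thesis unfolding C_def a_def by simp
qed

definition dd :: "nat \<Rightarrow> real" where "dd L = 1 - (1 + 1 / (real L + 1) ^ 2) * real L / (2 * real L + 1)"
definition EL :: "nat \<Rightarrow> real" where "EL L = 2 * (real L ^ 2 + 2) / (3 * real L * (real L + 2) * (real L + 1) ^ 2)"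

lemma var_le:
  assumes L3: "3 \<le> L" and kL: "(real L)\<^sup>2 * (real L + 1)\<^sup>2 \<le> k"
  shows "fs_var L k (fs_chi_tilde L) \<le>
     sin (pi / (real L + 2)) ^ 2 - 2 / (real L + 2) * sin (pi / (real L + 2)) ^ 2 * dd L
     - (616/1000) * (2 / (real L + 2)) * sin (pi / (real L + 2)) ^ 2 * (1 - sin (pi / (real L + 2)) ^ 2) + EL L"
proof -
  define t where "t = pi / (real L + 2)"
  define S where "S = sin t ^ 2"
  define C where "C = cos t"
  define al where "al = 2 / (real L + 2)"
  have Lpos: "0 < real L" using L3 by simp
  have kpos: "0 < k"
    using kL Lpos by (smt (verit) mult_pos_pos zero_less_power)
  have alpos: "0 < al" unfolding al_def by simp
  have t0: "0 < t" unfolding t_def by simp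
  have "pi * 1 \<le> pi * ((real L + 2) / 2)" using Lpos by (intro mult_left_mono) auto
  then have t2: "t \<le> pi / 2" unfolding t_def by (simp add: field_simps)
  have C0: "0 \<le> C" unfolding C_def using t0 t2 by (intro cos_ge_zero) auto
  have CS: "C ^ 2 = 1 - S" unfolding C_def S_def by (simp add: cos_squared_eq)
  have S0: "0 \<le> S" "S \<le> 1" unfolding S_def by (auto simp: abs_square_le_1)
  have E2: "(\<Sum>l\<le>L. sq L l ^ 2 * D L k l) \<le> 1 - sq L L ^ 2 * (1 - D L k L) + al * (\<Sum>l<L. real l ^ 2 + real l + 1) / k"
    using E2_bound[OF L3 kpos] unfolding al_def by simp
  have sqL2: "sq L L ^ 2 = al * S"
    unfolding sqL S_def al_def t_def by (simp add: power_mult_distrib)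
  have Lk: "real L ^ 2 / k \<le> 1 / (real L + 1) ^ 2"
    using kL kpos Lpos by (simp add: divide_simps)
  have DL: "D L k L \<le> (1 + 1 / (real L + 1) ^ 2) * real L / (2 * real L + 1)"
  proof -
    have "D L k L = (1 + real L ^ 2 / k) * real L / (2 * real L + 1)" using D_top[of L k] L3 kpos by simp
    also have "\<dots> \<le> (1 + 1 / (real L + 1) ^ 2) * real L / (2 * real L + 1)"
      using Lk Lpos by (intro divide_right_mono mult_right_mono) auto
    finally show ?thesis .
  qed
  then have ddle: "dd L \<le> 1 - D L k L" unfolding dd_def by simp
  have quad: "al * (\<Sum>l<L. real l ^ 2 + real l + 1) / k \<le> EL L"
  proof -
    have "al * (\<Sum>l<L. real l ^ 2 + real l + 1) / k = al * (real L * (real L ^ 2 + 2) / 3) / k"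
      by (simp add: sum_quad)
    also have "\<dots> \<le> al * (real L * (real L ^ 2 + 2) / 3) / ((real L)\<^sup>2 * (real L + 1)\<^sup>2)"
      using kL Lpos alpos kpos by (intro divide_left_mono) auto
    also have "\<dots> = EL L"
    proof -
      have nz: "real L \<noteq> 0" "real L + 1 \<noteq> 0" "real L + 2 \<noteq> 0" using Lpos by auto
      show ?thesis unfolding EL_def al_def using nz
        by (simp add: divide_simps) (simp add: algebra_simps power2_eq_square)
    qed
    finally show ?thesis .
  qed
  have E2': "(\<Sum>l\<le>L. sq L l ^ 2 * D L k l) \<le> 1 - al * S * dd L + EL L"
  proof -
    have "al * S * dd L \<le> al * S * (1 - D L k L)"
      using ddle alpos S0 by (intro mult_left_mono) auto
    moreover note E2[unfolded sqL2]
    ultimately show ?thesis using quad by linarith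
  qed
  have X: "C + 2 * ((fs_c k 1 * Z 1 - 1/2) * (sq L 0 * sq L 1)) \<le> (\<Sum>l\<le>L. sq L l * W L k 0 l)"
    using X_bound[OF L3 kpos] unfolding C_def t_def .
  have c1Z1: "577/1000 \<le> fs_c k 1 * Z 1"
  proof -
    have "1 * (577/1000) \<le> fs_c k 1 * Z 1"
      using c_ge1[OF kpos, of 1] Z1 by (intro mult_mono) auto
    then show ?thesis by simp
  qed
  have s01: "sq L 0 * sq L 1 = 2 * al * S * C"
    unfolding sq01 al_def S_def C_def t_def by simp
  have s01nn: "0 \<le> sq L 0 * sq L 1" using sq_nonneg[of 0 L] sq_nonneg[of 1 L] by simp
  have X1: "C * (1 + (308/1000) * al * S) \<le> (\<Sum>l\<le>L. sq L l * W L k 0 l)"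
  proof -
    have "2 * ((77/1000) * (sq L 0 * sq L 1)) \<le> 2 * ((fs_c k 1 * Z 1 - 1/2) * (sq L 0 * sq L 1))"
      using c1Z1 s01nn by (intro mult_left_mono mult_right_mono) auto
    then show ?thesis using X s01 by (simp add: algebra_simps)
  qed
  have X2: "C ^ 2 * (1 + (616/1000) * al * S) \<le> (\<Sum>l\<le>L. sq L l * W L k 0 l) ^ 2"
  proof -
    have nn: "0 \<le> C * (1 + (308/1000) * al * S)" using C0 alpos S0 by simp
    have "C ^ 2 * (1 + (616/1000) * al * S) \<le> (C * (1 + (308/1000) * al * S)) ^ 2"
    proof -
      have "(C * (1 + (308/1000) * al * S)) ^ 2 = C ^ 2 * (1 + (616/1000) * al * S) + C ^ 2 * ((308/1000) * al * S) ^ 2"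
        by (simp add: power2_eq_square algebra_simps)
      then show ?thesis by simp
    qed
    also have "\<dots> \<le> (\<Sum>l\<le>L. sq L l * W L k 0 l) ^ 2"
      using X1 nn by (intro power_mono) auto
    finally show ?thesis .
  qed
  have "fs_var L k (fs_chi_tilde L) \<le> 1 - al * S * dd L + EL L - C ^ 2 * (1 + (616/1000) * al * S)"
    using var_formula[OF L3, of k] E2' X2 by linarith
  also have "\<dots> = S - al * S * dd L - (616/1000) * al * S * (1 - S) + EL L"
    unfolding CS by (simp add: algebra_simps)
  finally show ?thesis unfolding S_def al_def t_def by simp
qed

definition pS :: "real \<Rightarrow> real" where "pS x = x - x^3/6 + x^5/120 + x^7/5040"
definition Su :: "nat \<Rightarrow> real" where "Su L = (pS (63 / (20 * (real L + 2)))) ^ 2"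
definition bV :: "nat \<Rightarrow> real" where "bV L = 1 - 2 / (real L + 2) * dd L - (616/1000) * (2 / (real L + 2))"
definition gV :: "nat \<Rightarrow> real" where "gV L = (616/1000) * (2 / (real L + 2))"

lemma Vnum: assumes "L \<in> {3,4,5,6,7,8}"
  shows "Su L * bV L + gV L * Su L ^ 2 + EL L < 1 / (real L + 1)" "0 \<le> bV L"
  using assms by (auto simp: Su_def pS_def bV_def gV_def EL_def dd_def power_divide)

lemma sin_315_neg: "sin (315/100 :: real) < 0"
proof -
  have b: "\<bar>sin (315/100::real) - (\<Sum>m<13. sin_coeff m * (315/100) ^ m)\<bar> \<le> inverse (fact 13) * \<bar>315/100\<bar> ^ 13"
    by (rule Maclaurin_sin_bound)
  have e: "(\<Sum>m<13. sin_coeff m * (315/100::real) ^ m) < - inverse (fact 13) * \<bar>315/100\<bar> ^ 13"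
    by (simp add: sin_coeff_def lessThan_nat_numeral fact_numeral power_divide)
  show ?thesis using b e by linarith
qed

lemma pi_lt: "pi < 315/100"
proof (rule ccontr)
  assume "\<not> pi < 315/100"
  then have "0 \<le> sin (315/100::real)" by (intro sin_ge_zero) auto
  then show False using sin_315_neg by simp
qed

lemma sin_le_pS: assumes "0 \<le> x" shows "sin x \<le> pS x"
proof -
  have b: "\<bar>sin x - (\<Sum>m<7. sin_coeff m * x ^ m)\<bar> \<le> inverse (fact 7) * \<bar>x\<bar> ^ 7"
    by (rule Maclaurin_sin_bound)
  have e: "(\<Sum>m<7. sin_coeff m * x ^ m) = x - x^3/6 + x^5/120"
    by (simp add: sin_coeff_def lessThan_nat_numeral fact_numeral)
  have b': "\<bar>sin x - (x - x^3/6 + x^5/120)\<bar> \<le> x ^ 7 / 5040"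
  proof -
    have f: "inverse (fact 7 :: real) = 1 / 5040" by (simp add: fact_numeral)
    have a: "\<bar>x\<bar> ^ 7 = x ^ 7" using assms by simp
    show ?thesis using b unfolding e f a by simp
  qed
  show ?thesis using abs_le_D1[OF b'] unfolding pS_def by linarith
qed

lemma S_le: assumes "1 \<le> L" shows "sin (pi / (real L + 2)) ^ 2 \<le> Su L"
proof -
  define tu where "tu = 63 / (20 * (real L + 2))"
  have tu0: "0 \<le> tu" unfolding tu_def by simp
  have "tu \<le> 63 / (20 * 3)" unfolding tu_def using assms by (intro divide_left_mono) auto
  then have tu2: "tu \<le> pi / 2" using pi_gt3 by simp
  have "pi / (real L + 2) \<le> (63/20) / (real L + 2)" using pi_lt by (intro divide_right_mono) auto
  then have tt: "pi / (real L + 2) \<le> tu" unfolding tu_def by simp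
  have t0: "0 \<le> pi / (real L + 2)" by simp
  have s0: "0 \<le> sin (pi / (real L + 2))"
    using t0 tt tu2 tu0 by (intro sin_ge_zero) auto
  have "sin (pi / (real L + 2)) \<le> sin tu"
  proof -
    have "- (pi/2) \<le> pi / (real L + 2)" "pi / (real L + 2) \<le> pi / 2" "- (pi/2) \<le> tu"
      using t0 tt tu2 tu0 pi_gt_zero by linarith+
    then show ?thesis using tt tu2 by (subst sin_mono_le_eq) auto
  qed
  also have "\<dots> \<le> pS tu" by (rule sin_le_pS[OF tu0])
  finally have "sin (pi / (real L + 2)) \<le> pS tu" .
  then have "sin (pi / (real L + 2)) ^ 2 \<le> pS tu ^ 2" using s0 by (intro power_mono) auto
  then show ?thesis unfolding Su_def tu_def .
qed

lemma dd_nonneg: "0 \<le> dd L"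
proof -
  define r where "r = 1 / (real L + 1) ^ 2"
  have r: "0 \<le> r" "r \<le> 1" unfolding r_def by (auto simp: divide_simps)
  have "r * real L \<le> 1 * real L" using r by (intro mult_right_mono) auto
  then have "(1 + r) * real L \<le> 2 * real L + 1" by (simp add: algebra_simps)
  then have "(1 + r) * real L / (2 * real L + 1) \<le> 1" by (simp add: divide_le_eq_1_pos)
  then show ?thesis unfolding dd_def r_def by simp
qed

lemma EL_lt: assumes "1 \<le> L" shows "EL L < 1 / (real L + 1) ^ 2"
proof -
  have x: "1 \<le> real L" using assms by simp
  have sq0: "0 \<le> real L * real L" by simp
  have ineq: "2 * (real L * real L + 2) < 3 * real L * (real L + 2)"
  proof -
    have h: "4 < real L * real L + real L * 6" using x sq0 by linarith
    show ?thesis using h by (simp add: algebra_simps)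
  qed
  have pos: "0 < 3 * real L * (real L + 2)" using x by simp
  have q: "2 * (real L ^ 2 + 2) / (3 * real L * (real L + 2)) < 1"
    using ineq pos by (simp add: power2_eq_square)
  have "EL L = (2 * (real L ^ 2 + 2) / (3 * real L * (real L + 2))) / (real L + 1) ^ 2"
    unfolding EL_def by simp
  also have "\<dots> < 1 / (real L + 1) ^ 2"
    using q by (intro divide_strict_right_mono) auto
  finally show ?thesis .
qed

lemma var_le2:
  assumes L3: "3 \<le> L" and kL: "(real L)\<^sup>2 * (real L + 1)\<^sup>2 \<le> k"
  shows "fs_var L k (fs_chi_tilde L) \<le> sin (pi / (real L + 2)) ^ 2 + EL L"
proof -
  define S where "S = sin (pi / (real L + 2)) ^ 2"
  have S0: "0 \<le> S" "S \<le> 1" unfolding S_def by (auto simp: abs_square_le_1)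
  have "0 \<le> 2 / (real L + 2) * S * dd L" using S0 dd_nonneg by simp
  moreover have "0 \<le> (616/1000) * (2 / (real L + 2)) * S * (1 - S)" using S0 by simp
  ultimately show ?thesis using var_le[OF assms] unfolding S_def[symmetric] by linarith
qed

lemma S_le_t2: "sin (pi / (real L + 2)) ^ 2 \<le> pi ^ 2 / (real L + 2) ^ 2"
proof -
  have t0: "0 \<le> pi / (real L + 2)" by simp
  have "sin (pi / (real L + 2)) \<le> pi / (real L + 2)" using sin_x_le_x t0 by blast
  moreover have "pi / (real L + 2) \<le> pi" by (simp add: divide_simps)
  moreover have "0 \<le> sin (pi / (real L + 2))" using t0 by (intro sin_ge_zero) (auto simp: divide_simps)
  ultimately have "sin (pi / (real L + 2)) ^ 2 \<le> (pi / (real L + 2)) ^ 2" by (intro power_mono) auto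
  then show ?thesis by (simp add: power_divide)
qed

lemma claim_a:
  assumes L3: "3 \<le> L" and kL: "(real L)\<^sup>2 * (real L + 1)\<^sup>2 \<le> k"
  shows "fs_var L k (fs_chi_tilde L) < pi\<^sup>2 / (real L + 2)\<^sup>2 + 1 / (real L + 1)\<^sup>2"
  using var_le2[OF assms] S_le_t2[of L] EL_lt[of L] L3 by linarith

lemma pi2: "pi ^ 2 < 10"
proof -
  have "pi ^ 2 < (315/100) ^ 2" using pi_lt by (intro power_strict_mono) auto
  then show ?thesis by (simp add: power_divide)
qed

lemma claim_b: "pi\<^sup>2 / (real L + 2)\<^sup>2 + 1 / (real L + 1)\<^sup>2 < 11 / (real L + 1)\<^sup>2"
proof -
  have "(real L + 1) ^ 2 \<le> (real L + 2) ^ 2" by (intro power_mono) auto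
  then have "pi\<^sup>2 / (real L + 2)\<^sup>2 \<le> pi\<^sup>2 / (real L + 1)\<^sup>2"
    by (intro divide_left_mono) auto
  also have "\<dots> < 10 / (real L + 1)\<^sup>2" using pi2 by (intro divide_strict_right_mono) auto
  finally show ?thesis by (simp add: add_divide_distrib[symmetric])
qed

lemma V_mono:
  fixes S Su b g :: real
  assumes "0 \<le> S" "S \<le> Su" "0 \<le> b" "0 \<le> g"
  shows "S * b + g * S ^ 2 \<le> Su * b + g * Su ^ 2"
proof -
  have "S * b \<le> Su * b" using assms by (intro mult_right_mono) auto
  moreover have "S ^ 2 \<le> Su ^ 2" using assms by (intro power_mono) auto
  then have "g * S ^ 2 \<le> g * Su ^ 2" using assms by (intro mult_left_mono) auto
  ultimately show ?thesis by linarith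
qed

lemma claim_e_small:
  assumes L: "L \<in> {3,4,5,6,7,8}" and kL: "(real L)\<^sup>2 * (real L + 1)\<^sup>2 \<le> k"
  shows "fs_var L k (fs_chi_tilde L) < 1 / (real L + 1)"
proof -
  have L3: "3 \<le> L" using L by auto
  define S where "S = sin (pi / (real L + 2)) ^ 2"
  have S0: "0 \<le> S" unfolding S_def by simp
  have SS: "S \<le> Su L" unfolding S_def using S_le[of L] L3 by simp
  have g0: "0 \<le> gV L" unfolding gV_def by simp
  have gen: "S - al * S * d - c * al * S * (1 - S) + E = S * (1 - al * d - c * al) + (c * al) * S ^ 2 + E"
    for al d c E :: real by (simp add: algebra_simps power2_eq_square)
  have "fs_var L k (fs_chi_tilde L) \<le> S * bV L + gV L * S ^ 2 + EL L"
    using var_le[OF L3 kL] unfolding S_def[symmetric] bV_def gV_def gen .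
  also have "\<dots> \<le> Su L * bV L + gV L * Su L ^ 2 + EL L"
    using V_mono[OF S0 SS Vnum(2)[OF L] g0] by simp
  also have "\<dots> < 1 / (real L + 1)" using Vnum(1)[OF L] .
  finally show ?thesis .
qed

lemma claim_e_large:
  assumes L: "9 \<le> L" and kL: "(real L)\<^sup>2 * (real L + 1)\<^sup>2 \<le> k"
  shows "fs_var L k (fs_chi_tilde L) < 1 / (real L + 1)"
proof -
  define x where "x = real L"
  have x9: "9 \<le> x" unfolding x_def using L by simp
  have a: "pi ^ 2 / (x + 2) ^ 2 \<le> 10 / (11 * (x + 1))"
  proof -
    have "11 * (x + 1) \<le> (x + 2) * (x + 2)" using x9 by (intro mult_mono) auto
    then have "pi ^ 2 / (x + 2) ^ 2 \<le> pi ^ 2 / (11 * (x + 1))"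
      using x9 by (intro divide_left_mono) (auto simp: power2_eq_square)
    also have "\<dots> \<le> 10 / (11 * (x + 1))" using pi2 x9 by (intro divide_right_mono) auto
    finally show ?thesis .
  qed
  have b: "EL L \<le> 2 / (3 * (10 * (x + 1)))"
  proof -
    have num: "2 * (x ^ 2 + 2) \<le> 2 * (x * (x + 2))" using x9 by (simp add: power2_eq_square algebra_simps)
    have "EL L = 2 * (x ^ 2 + 2) / (3 * x * (x + 2) * (x + 1) ^ 2)" unfolding EL_def x_def ..
    also have "\<dots> \<le> 2 * (x * (x + 2)) / (3 * x * (x + 2) * (x + 1) ^ 2)"
      using num x9 by (intro divide_right_mono) auto
    also have "\<dots> = 2 / (3 * ((x + 1) * (x + 1)))"
    proof -
      have nz: "x \<noteq> 0" "x + 2 \<noteq> 0" "x + 1 \<noteq> 0" using x9 by auto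
      have d1: "3 * x * (x + 2) * (x + 1) ^ 2 \<noteq> 0" "3 * ((x + 1) * (x + 1)) \<noteq> 0" using nz by auto
      show ?thesis by (simp only: frac_eq_eq[OF d1]) (simp add: algebra_simps power2_eq_square)
    qed
    also have "\<dots> \<le> 2 / (3 * (10 * (x + 1)))"
    proof -
      have h: "10 * (x + 1) \<le> (x + 1) * (x + 1)" using x9 by (intro mult_right_mono) auto
      show ?thesis using h x9 by (intro divide_left_mono mult_left_mono) auto
    qed
    finally show ?thesis .
  qed
  have c: "10 / (11 * (x + 1)) + 2 / (3 * (10 * (x + 1))) < 1 / (x + 1)"
  proof -
    have e1: "10 / (11 * (x + 1)) = (10/11) / (x + 1)" by (simp add: divide_divide_eq_left)
    have e2: "2 / (3 * (10 * (x + 1))) = (1/15) / (x + 1)"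
    proof -
      have "2 / (3 * (10 * (x + 1))) = 2 / (2 * (15 * (x + 1)))" by simp
      also have "\<dots> = 1 / (15 * (x + 1))" 
      proof -
        have g: "(2::real) / (2 * y) = 1 / y" for y by (cases "y = 0") (simp_all add: field_simps)
        show ?thesis by (rule g)
      qed
      also have "\<dots> = (1/15) / (x + 1)" by (simp add: divide_divide_eq_left)
      finally show ?thesis .
    qed
    have "(10/11) / (x + 1) + (1/15) / (x + 1) = (161/165) / (x + 1)"
      by (subst add_divide_distrib[symmetric]) simp
    also have "\<dots> < 1 / (x + 1)" using x9 by (intro divide_strict_right_mono) auto
    finally show ?thesis unfolding e1 e2 .
  qed
  have "fs_var L k (fs_chi_tilde L) \<le> sin (pi / (real L + 2)) ^ 2 + EL L"
    using var_le2[OF _ kL] L by simp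
  also have "\<dots> \<le> pi ^ 2 / (x + 2) ^ 2 + EL L" using S_le_t2[of L] unfolding x_def by simp
  finally show ?thesis using a b c unfolding x_def by linarith
qed

lemma claim_e:
  assumes L3: "3 \<le> L" and kL: "(real L)\<^sup>2 * (real L + 1)\<^sup>2 \<le> k"
  shows "fs_var L k (fs_chi_tilde L) < 1 / (real L + 1)"
proof (cases "9 \<le> L")
  case True then show ?thesis using claim_e_large kL by blast
next
  case False
  then have "L \<in> {3,4,5,6,7,8}" using L3 by auto
  then show ?thesis using claim_e_small kL by blast
qed

lemma chi_unit: "fs_unit L (fs_chi_tilde L)"
proof -
  have "fs_inner L (fs_chi_tilde L) (fs_chi_tilde L) = (\<Sum>l\<le>L. complex_of_real (sq L l ^ 2))"
    unfolding inner_chi by (rule sum.cong) (auto simp: chi_eq power2_eq_square)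
  also have "\<dots> = complex_of_real (\<Sum>l\<le>L. sq L l ^ 2)" by simp
  also have "\<dots> = 1" by (simp add: sum_sq_sq)
  finally show ?thesis using vanish_chi[of L] unfolding fs_unit_def vanish_def by simp
qed

lemma coord_cont: "continuous_on S (\<lambda>v::fs_vec. v q)"
  by (rule continuous_on_subset[OF continuous_on_product_coordinates]) simp

lemma cont_xa: "continuous_on S (fs_xa L k a)"
  unfolding fs_xa_def
  apply (rule continuous_on_coordinatewise_then_product)
  apply (rule continuous_on_sum)
  apply (rule continuous_on_mult'[OF coord_cont continuous_on_const])
  done

lemma cont_xa_p: "continuous_on S (\<lambda>v. fs_xa L k a v p)"
  using continuous_on_product_then_coordinatewise[OF cont_xa] .

lemma cont_x: "continuous_on S (fs_x L k i)"
proof -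
  consider "i = 1" | "i = 2" | "i \<noteq> 1" "i \<noteq> 2" by blast
  then show ?thesis
  proof cases
    case 1
    then have e: "fs_x L k i = (\<lambda>v p. (fs_xa L k 1 v p + fs_xa L k (-1) v p) / 2)"
      by (simp add: fs_x_def fun_eq_iff)
    show ?thesis unfolding e
      by (intro continuous_on_coordinatewise_then_product continuous_on_divide continuous_on_add cont_xa_p continuous_on_const) auto
  next
    case 2
    then have e: "fs_x L k i = (\<lambda>v p. (fs_xa L k 1 v p - fs_xa L k (-1) v p) / (2 * \<i>))"
      by (simp add: fs_x_def fun_eq_iff)
    show ?thesis unfolding e
      by (intro continuous_on_coordinatewise_then_product continuous_on_divide continuous_on_diff cont_xa_p continuous_on_const) auto
  next
    case 3
    then have e: "fs_x L k i = fs_xa L k 0" by (simp add: fs_x_def fun_eq_iff)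
    show ?thesis unfolding e by (rule cont_xa)
  qed
qed

lemma cont_expect:
  assumes "continuous_on UNIV A"
  shows "continuous_on S (\<lambda>v. fs_expect L A v)"
proof -
  have "continuous_on UNIV (\<lambda>v. A v p)" for p
    using continuous_on_product_then_coordinatewise[OF assms] .
  then have "continuous_on S (\<lambda>v. A v p)" for p by (rule continuous_on_subset) simp
  then show ?thesis unfolding fs_expect_def fs_inner_def
    by (intro continuous_on_sum continuous_on_mult' continuous_on_cnj coord_cont) auto
qed

lemma cont_var: "continuous_on S (fs_var L k)"
proof -
  have c2: "continuous_on UNIV (\<lambda>v. fs_x L k i (fs_x L k i v))" for i
    using continuous_on_compose[OF cont_x cont_x, of UNIV] by (simp add: o_def)
  show ?thesis unfolding fs_var_def
    by (intro continuous_intros cont_expect c2 cont_x)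
qed

lemma unit_norm: assumes "fs_unit L v" "p \<in> fs_idx L" shows "cmod (v p) \<le> 1"
proof -
  have "fs_inner L v v = complex_of_real (\<Sum>q\<in>fs_idx L. cmod (v q) ^ 2)"
    unfolding fs_inner_def of_real_sum by (rule sum.cong[OF refl]) (metis complex_norm_square mult.commute)
  then have s: "(\<Sum>q\<in>fs_idx L. cmod (v q) ^ 2) = 1" using assms(1) unfolding fs_unit_def
    by (metis of_real_eq_1_iff)
  have "cmod (v p) ^ 2 \<le> (\<Sum>q\<in>fs_idx L. cmod (v q) ^ 2)"
    using assms(2) by (intro member_le_sum) auto
  then have "cmod (v p) ^ 2 \<le> 1 ^ 2" using s by simp
  then show ?thesis by (rule power2_le_imp_le) simp
qed

lemma exists_min:
  assumes "fs_unit L chi1"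
  shows "\<exists>chi0. fs_unit L chi0 \<and> (\<forall>chi. fs_unit L chi \<longrightarrow> fs_var L k chi0 \<le> fs_var L k chi)"
proof -
  define U where "U = {v. fs_unit L v}"
  define K where "K = (PiE UNIV (\<lambda>p. if p \<in> fs_idx L then cball (0::complex) 1 else {0}))"
  have cK: "compact K"
  proof -
    have "compactin (product_topology (\<lambda>i. euclidean) UNIV) K"
      unfolding K_def compactin_PiE by auto
    then show ?thesis by (simp add: euclidean_product_topology)
  qed
  have sub: "U \<subseteq> K"
    unfolding U_def K_def using unit_norm by (auto simp: fs_unit_def)
  have cl1: "closed {v::fs_vec. \<forall>p. p \<notin> fs_idx L \<longrightarrow> v p = 0}"
  proof -
    have "{v::fs_vec. \<forall>p. p \<notin> fs_idx L \<longrightarrow> v p = 0} = (\<Inter>p\<in>- fs_idx L. {v. v p = 0})" by auto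
    moreover have "closed {v::fs_vec. v p = 0}" for p
      by (rule closed_Collect_eq[OF coord_cont continuous_on_const])
    ultimately show ?thesis by (simp add: closed_INT)
  qed
  have cl2: "closed {v::fs_vec. fs_inner L v v = 1}"
    unfolding fs_inner_def
    by (rule closed_Collect_eq) (intro continuous_on_sum continuous_on_mult continuous_on_cnj coord_cont, rule continuous_on_const)
  have "U = {v::fs_vec. \<forall>p. p \<notin> fs_idx L \<longrightarrow> v p = 0} \<inter> {v. fs_inner L v v = 1}"
    unfolding U_def fs_unit_def by auto
  then have clU: "closed U" using cl1 cl2 by auto
  have "compact U"
    using compact_Int_closed[OF cK clU] sub by (simp add: Int_absorb1)
  moreover have "U \<noteq> {}" using assms unfolding U_def by auto
  ultimately obtain x where xU: "x \<in> U" and xmin: "\<forall>y\<in>U. fs_var L k x \<le> fs_var L k y"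
    using continuous_attains_inf[of U "fs_var L k"] cont_var by blast
  show ?thesis
  proof (intro exI conjI allI impI)
    show "fs_unit L x" using xU unfolding U_def by simp
    fix y assume "fs_unit L y"
    then have "y \<in> U" unfolding U_def by simp
    then show "fs_var L k x \<le> fs_var L k y" using xmin by blast
  qed
qed

theorem mainTheorem10:
  fixes L :: nat and k :: real
  assumes "L \<ge> 3"
    and "k \<ge> (real L)\<^sup>2 * (real L + 1)\<^sup>2"
  shows "fs_var L k (fs_chi_tilde L) < pi\<^sup>2 / (real L + 2)\<^sup>2 + 1 / (real L + 1)\<^sup>2
       \<and> pi\<^sup>2 / (real L + 2)\<^sup>2 + 1 / (real L + 1)\<^sup>2 < 11 / (real L + 1)\<^sup>2
       \<and> fs_unit L (fs_chi_tilde L)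
       \<and> (\<exists>chi0. fs_unit L chi0 \<and> (\<forall>chi. fs_unit L chi \<longrightarrow> fs_var L k chi0 \<le> fs_var L k chi)
              \<and> fs_var L k chi0 \<le> fs_var L k (fs_chi_tilde L))
       \<and> fs_var L k (fs_chi_tilde L) < 1 / (real L + 1)"
proof -
  obtain chi0 where c0: "fs_unit L chi0" "\<forall>chi. fs_unit L chi \<longrightarrow> fs_var L k chi0 \<le> fs_var L k chi"
    using exists_min[OF chi_unit[of L], of k] by blast
  have "fs_var L k chi0 \<le> fs_var L k (fs_chi_tilde L)" using c0(2) chi_unit[of L] by blast
  then show ?thesis
    using claim_a[OF assms] claim_b[of L] chi_unit[of L] c0 claim_e[OF assms] by blast
qed

end
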